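(* Let $C_5$ be the $5$-cycle (pentagon) and $I(C_5)$ its edge ideal in a polynomial ring in five variables over a field. Then $I(C_5)^q$ has linear quotients for every $q\ge 2$.
   Context: The edge ideal of a graph is generated by the products $x_ix_j$ of variables corresponding to its edges $\{i,j\}$. A monomial ideal generated in a single degree has linear quotients if its minimal monomial generators can be ordered $u_1>\cdots>u_r$ so that each colon ideal $(u_1,\ldots,u_i):u_{i+1}$, $1\le i<r$, is generated by a subset of the variables. *)

theory Defs
  imports "HOL-Library.Poly_Mapping" "HOL-Library.Numeral_Type"
begin

type_synonym 'k poly5 = "(5 \<Rightarrow>\<^sub>0 nat) \<Rightarrow>\<^sub>0 'k"

definition monom :: "(5 \<Rightarrow>\<^sub>0 nat) \<Rightarrow> 'k::field poly5" where
  "monom \<alpha> = Poly_Mapping.single \<alpha> 1"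

definition var :: "5 \<Rightarrow> 'k::field poly5" where
  "var i = monom (Poly_Mapping.single i 1)"

definition ideal_gen :: "'a::comm_ring_1 set \<Rightarrow> 'a set" where
  "ideal_gen S = {x. \<exists>F c. finite F \<and> F \<subseteq> S \<and> x = (\<Sum>s\<in>F. c s * s)}"

definition ideal_pow :: "'a::comm_ring_1 set \<Rightarrow> nat \<Rightarrow> 'a set" where
  "ideal_pow I q = ideal_gen {prod_list xs | xs. length xs = q \<and> set xs \<subseteq> I}"

definition colon :: "'a::comm_ring_1 set \<Rightarrow> 'a \<Rightarrow> 'a set" where
  "colon I g = {f. f * g \<in> I}"

definition edge_ideal_C5 :: "'k::field poly5 set" where
  "edge_ideal_C5 = ideal_gen {var i * var (i + 1) | i. True}"

definition min_mon_gens :: "'k::field poly5 set \<Rightarrow> (5 \<Rightarrow>\<^sub>0 nat) set" where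
  "min_mon_gens I = {\<alpha>. monom \<alpha> \<in> I \<and>
      (\<forall>\<beta> \<gamma>. \<alpha> = \<beta> + \<gamma> \<and> \<gamma> \<noteq> 0 \<longrightarrow> monom \<beta> \<notin> I)}"

definition has_linear_quotients :: "'k::field poly5 set \<Rightarrow> bool" where
  "has_linear_quotients I \<longleftrightarrow>
    (\<exists>us. distinct us \<and> set us = min_mon_gens I \<and>
      (\<forall>i. 1 \<le> i \<and> i < length us \<longrightarrow>
         (\<exists>V. colon (ideal_gen (monom ` set (take i us)) :: 'k poly5 set) (monom (us ! i))
               = ideal_gen (var ` V))))"

end

theory Submission
  imports Defs "HOL-Library.Product_Lexorder"
begin

lemma ig_zero: "0 \<in> ideal_gen S"
  unfolding ideal_gen_def by (rule CollectI, rule exI[of _ "{}"]) auto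

lemma ig_base: "s \<in> S \<Longrightarrow> s \<in> ideal_gen S"
  unfolding ideal_gen_def by (rule CollectI, rule exI[of _ "{s}"], rule exI[of _ "\<lambda>_. 1"]) auto

lemma ig_add:
  assumes "x \<in> ideal_gen S" "y \<in> ideal_gen S"
  shows "x + y \<in> ideal_gen S"
proof -
  obtain F c where F: "finite F" "F \<subseteq> S" "x = (\<Sum>s\<in>F. c s * s)"
    using assms(1) unfolding ideal_gen_def mem_Collect_eq by (elim exE conjE) blast
  obtain G d where G: "finite G" "G \<subseteq> S" "y = (\<Sum>s\<in>G. d s * s)"
    using assms(2) unfolding ideal_gen_def mem_Collect_eq by (elim exE conjE) blast
  define c' where "c' s = (if s \<in> F then c s else 0)" for s
  define d' where "d' s = (if s \<in> G then d s else 0)" for s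
  have x: "x = (\<Sum>s\<in>F \<union> G. c' s * s)"
    unfolding F(3) c'_def using F(1) G(1)
    by (intro sum.mono_neutral_cong_left) simp_all
  have y: "y = (\<Sum>s\<in>F \<union> G. d' s * s)"
    unfolding G(3) d'_def using F(1) G(1)
    by (intro sum.mono_neutral_cong_left) auto
  have "x + y = (\<Sum>s\<in>F \<union> G. (c' s + d' s) * s)"
    unfolding x y by (simp add: sum.distrib distrib_right)
  moreover have "finite (F \<union> G)" "F \<union> G \<subseteq> S" using F G by auto
  ultimately show ?thesis unfolding ideal_gen_def
    by (intro CollectI exI[of _ "F \<union> G"] exI[of _ "\<lambda>s. c' s + d' s"]) simp
qed

lemma ig_mult:
  assumes "x \<in> ideal_gen S"
  shows "r * x \<in> ideal_gen S"
proof -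
  obtain F c where F: "finite F" "F \<subseteq> S" "x = (\<Sum>s\<in>F. c s * s)"
    using assms(1) unfolding ideal_gen_def mem_Collect_eq by (elim exE conjE) blast
  have "r * x = (\<Sum>s\<in>F. (r * c s) * s)"
    unfolding F(3) by (simp add: sum_distrib_left mult.assoc)
  then show ?thesis unfolding ideal_gen_def using F
    by (intro CollectI exI[of _ F] exI[of _ "\<lambda>s. r * c s"]) simp
qed

lemma ig_sum:
  assumes "finite A" "\<And>i. i \<in> A \<Longrightarrow> f i \<in> ideal_gen S"
  shows "sum f A \<in> ideal_gen S"
  using assms by (induction A rule: finite_induct) (auto intro: ig_zero ig_add)

lemma ig_sub:
  assumes "S \<subseteq> ideal_gen T"
  shows "ideal_gen S \<subseteq> ideal_gen T"
proof
  fix x assume "x \<in> ideal_gen S"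
  then obtain F c where F: "finite F" "F \<subseteq> S" "x = (\<Sum>s\<in>F. c s * s)"
    unfolding ideal_gen_def mem_Collect_eq by (elim exE conjE) blast
  show "x \<in> ideal_gen T" unfolding F(3)
    using F assms by (intro ig_sum ig_mult) auto
qed

definition dvm :: "(5 \<Rightarrow>\<^sub>0 nat) \<Rightarrow> (5 \<Rightarrow>\<^sub>0 nat) \<Rightarrow> bool" where
  "dvm a m \<longleftrightarrow> (\<forall>i. Poly_Mapping.lookup a i \<le> Poly_Mapping.lookup m i)"

lemma monom_mult: "(monom a :: 'k::field poly5) * monom b = monom (a + b)"
  unfolding monom_def by (simp add: mult_single)

lemma keys_monom [simp]: "Poly_Mapping.keys (monom a :: 'k::field poly5) = {a}"
  unfolding monom_def by simp

lemma expansion: "f = (\<Sum>m\<in>Poly_Mapping.keys f. Poly_Mapping.single m (Poly_Mapping.lookup f m))"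
proof (rule poly_mapping_eqI)
  fix k
  have "Poly_Mapping.lookup (\<Sum>m\<in>Poly_Mapping.keys f. Poly_Mapping.single m (Poly_Mapping.lookup f m)) k
      = (\<Sum>m\<in>Poly_Mapping.keys f. (Poly_Mapping.lookup f m when m = k))"
    by (simp add: lookup_sum lookup_single)
  also have "\<dots> = Poly_Mapping.lookup f k"
  proof (cases "k \<in> Poly_Mapping.keys f")
    case True
    then show ?thesis
      by (simp add: when_def sum.delta')
  next
    case False
    then show ?thesis by (simp add: when_def sum.delta' in_keys_iff)
  qed
  finally show "Poly_Mapping.lookup f k = Poly_Mapping.lookup (\<Sum>m\<in>Poly_Mapping.keys f. Poly_Mapping.single m (Poly_Mapping.lookup f m)) k" by simp
qed

lemma M1a:
  assumes "f \<in> ideal_gen ((monom :: _ \<Rightarrow> 'k::field poly5) ` A)" "m \<in> Poly_Mapping.keys f"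
  shows "\<exists>a\<in>A. dvm a m"
proof -
  obtain F c where F: "finite F" "F \<subseteq> monom ` A" "f = (\<Sum>s\<in>F. c s * s)"
    using assms(1) unfolding ideal_gen_def mem_Collect_eq by (elim exE conjE) blast
  have "m \<in> (\<Union>s\<in>F. Poly_Mapping.keys (c s * s))" using assms(2) keys_sum[of "\<lambda>s. c s * s" F] F(3) by (simp add: subset_iff)
  then obtain s where s: "s \<in> F" "m \<in> Poly_Mapping.keys (c s * s)" by blast
  then obtain a where a: "a \<in> A" "s = monom a" using F(2) by blast
  have "m \<in> {x + y |x y. x \<in> Poly_Mapping.keys (c s) \<and> y \<in> Poly_Mapping.keys s}" using keys_mult s(2) by (rule subsetD)
  then obtain x y where "m = x + y" "y \<in> Poly_Mapping.keys s" by blast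
  then have "m = x + a" using a(2) by simp
  then have "dvm a m" unfolding dvm_def by (simp add: lookup_add)
  then show ?thesis using a by blast
qed

lemma M1b:
  assumes "\<And>m. m \<in> Poly_Mapping.keys f \<Longrightarrow> \<exists>a\<in>A. dvm a m"
  shows "f \<in> ideal_gen ((monom :: _ \<Rightarrow> 'k::field poly5) ` A)"
proof -
  have "Poly_Mapping.single m (Poly_Mapping.lookup f m) \<in> ideal_gen ((monom :: _ \<Rightarrow> 'k::field poly5) ` A)"
    if "m \<in> Poly_Mapping.keys f" for m
  proof -
    have "\<exists>a\<in>A. dvm a m" using that by (rule assms)
    then obtain a where a: "a \<in> A" "dvm a m" by blast
    have "m = (m - a) + a"
      using a(2) by (intro poly_mapping_eqI) (simp add: lookup_add lookup_minus dvm_def)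
    then have "Poly_Mapping.single m (Poly_Mapping.lookup f m) = Poly_Mapping.single (m - a) (Poly_Mapping.lookup f m) * monom a"
      unfolding monom_def by (simp add: mult_single)
    then show ?thesis using a by (metis ig_base ig_mult imageI)
  qed
  then show ?thesis by (subst expansion) (intro ig_sum, auto)
qed

lemma M1: "f \<in> ideal_gen ((monom :: _ \<Rightarrow> 'k::field poly5) ` A) \<longleftrightarrow> (\<forall>m\<in>Poly_Mapping.keys f. \<exists>a\<in>A. dvm a m)"
  using M1a M1b by blast

lemma M1_monom: "(monom b :: 'k::field poly5) \<in> ideal_gen (monom ` A) \<longleftrightarrow> (\<exists>a\<in>A. dvm a b)"
  by (simp add: M1)

lemma shift_lookup: "Poly_Mapping.lookup (f * (monom u :: 'k::field poly5)) (m + u) = Poly_Mapping.lookup f m"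
proof -
  have "f * monom u = (\<Sum>k\<in>Poly_Mapping.keys f. Poly_Mapping.single (k + u) (Poly_Mapping.lookup f k))"
    by (subst expansion) (simp add: sum_distrib_right monom_def mult_single)
  then have "Poly_Mapping.lookup (f * monom u) (m + u) = (\<Sum>k\<in>Poly_Mapping.keys f. (Poly_Mapping.lookup f k when k + u = m + u))"
    by (simp add: lookup_sum lookup_single)
  also have "\<dots> = (\<Sum>k\<in>Poly_Mapping.keys f. (Poly_Mapping.lookup f k when k = m))" by simp
  also have "\<dots> = Poly_Mapping.lookup f m"
    by (cases "m \<in> Poly_Mapping.keys f") (simp_all add: when_def sum.delta' in_keys_iff)
  finally show ?thesis .
qed

lemma five_cases: "(j::5) = 0 \<or> j = 1 \<or> j = 2 \<or> j = 3 \<or> j = 4"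
proof (cases j)
  case (of_int z)
  then have "z = 0 \<or> z = 1 \<or> z = 2 \<or> z = 3 \<or> z = 4" by auto
  then show ?thesis using of_int by auto
qed

lemma five_zero [simp]: "(5::5) = 0" by simp

lemma UNIV5: "(UNIV :: 5 set) = {0,1,2,3,4}"
  using five_cases by blast

definition edge :: "5 \<Rightarrow> (5 \<Rightarrow>\<^sub>0 nat)" where
  "edge j = Poly_Mapping.single j 1 + Poly_Mapping.single (j+1) 1"

primrec Gs :: "nat \<Rightarrow> (5 \<Rightarrow>\<^sub>0 nat) set" where
  "Gs 0 = {0}"
| "Gs (Suc q) = {edge j + g | j g. g \<in> Gs q}"

lemma var_mult_edge: "(var i :: 'k::field poly5) * var (i+1) = monom (edge i)"
  unfolding var_def edge_def by (simp add: monom_mult)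

lemma edge_ideal_eq: "(edge_ideal_C5 :: 'k::field poly5 set) = ideal_gen (monom ` range edge)"
proof -
  have "{(var i :: 'k poly5) * var (i + 1) | i. True} = monom ` range edge"
    by (auto simp: var_mult_edge)
  then show ?thesis unfolding edge_ideal_C5_def by simp
qed

lemma prod_mem:
  assumes "x \<in> ideal_gen ((monom :: _ \<Rightarrow> 'k::field poly5) ` A)"
      and "y \<in> ideal_gen ((monom :: _ \<Rightarrow> 'k::field poly5) ` B)"
  shows "x * y \<in> ideal_gen ((monom :: _ \<Rightarrow> 'k::field poly5) ` {a + b | a b. a \<in> A \<and> b \<in> B})"
proof (rule M1b)
  fix m assume "m \<in> Poly_Mapping.keys (x * y)"
  then have "m \<in> {k + l |k l. k \<in> Poly_Mapping.keys x \<and> l \<in> Poly_Mapping.keys y}"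
    using keys_mult by (rule subsetD[rotated])
  then obtain k l where kl: "m = k + l" "k \<in> Poly_Mapping.keys x" "l \<in> Poly_Mapping.keys y" by blast
  obtain a where a: "a \<in> A" "dvm a k" using M1a[OF assms(1) kl(2)] by blast
  obtain b where b: "b \<in> B" "dvm b l" using M1a[OF assms(2) kl(3)] by blast
  have "dvm (a + b) m" using a(2) b(2) unfolding kl(1) dvm_def by (simp add: lookup_add add_mono)
  then show "\<exists>c\<in>{a + b |a b. a \<in> A \<and> b \<in> B}. dvm c m" using a b by blast
qed

lemma Gs_Suc_eq: "Gs (Suc q) = {a + b | a b. a \<in> range edge \<and> b \<in> Gs q}"
  by auto

lemma monom_zero: "(monom 0 :: 'k::field poly5) = 1"
  unfolding monom_def by simp

lemma prod_list_mem:
  assumes "set xs \<subseteq> (edge_ideal_C5 :: 'k::field poly5 set)"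
  shows "prod_list xs \<in> ideal_gen ((monom :: _ \<Rightarrow> 'k poly5) ` Gs (length xs))"
  using assms
proof (induction xs)
  case Nil
  then show ?case by (simp add: monom_zero[symmetric] ig_base)
next
  case (Cons x xs)
  then have x: "x \<in> ideal_gen ((monom :: _ \<Rightarrow> 'k poly5) ` range edge)"
    using edge_ideal_eq by auto
  have "x * prod_list xs \<in> ideal_gen ((monom :: _ \<Rightarrow> 'k poly5) ` {a + b | a b. a \<in> range edge \<and> b \<in> Gs (length xs)})"
    using prod_mem[OF x] Cons by auto
  moreover have "length (x # xs) = Suc (length xs)" by simp
  ultimately show ?case by (simp only: Gs_Suc_eq prod_list.Cons)
qed

lemma pow_sub: "ideal_pow (edge_ideal_C5 :: 'k::field poly5 set) q \<subseteq> ideal_gen (monom ` Gs q)"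
  unfolding ideal_pow_def
proof (rule ig_sub, rule subsetI)
  fix x assume "x \<in> {prod_list xs |xs. length xs = q \<and> set xs \<subseteq> (edge_ideal_C5 :: 'k poly5 set)}"
  then obtain xs where "x = prod_list xs" "length xs = q" "set xs \<subseteq> (edge_ideal_C5 :: 'k poly5 set)" by blast
  then show "x \<in> ideal_gen (monom ` Gs q)" using prod_list_mem[of xs] by simp
qed

lemma monom_prod_exists:
  assumes "g \<in> Gs q"
  shows "\<exists>xs. length xs = q \<and> set xs \<subseteq> (edge_ideal_C5 :: 'k::field poly5 set) \<and> prod_list xs = monom g"
  using assms
proof (induction q arbitrary: g)
  case 0
  then show ?case by (auto simp: monom_zero)
next
  case (Suc q)
  then obtain j h where g: "g = edge j + h" "h \<in> Gs q" by auto
  obtain xs where xs: "length xs = q" "set xs \<subseteq> (edge_ideal_C5 :: 'k::field poly5 set)" "prod_list xs = monom h"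
    using Suc.IH[OF g(2)] by blast
  have e: "(monom (edge j) :: 'k poly5) \<in> edge_ideal_C5"
    unfolding edge_ideal_eq by (rule ig_base) simp
  show ?case
    by (rule exI[of _ "monom (edge j) # xs"]) (use xs e g in \<open>simp add: monom_mult\<close>)
qed

lemma monom_in_pow:
  assumes "g \<in> Gs q"
  shows "(monom g :: 'k::field poly5) \<in> ideal_pow edge_ideal_C5 q"
proof -
  obtain xs where xs: "length xs = q" "set xs \<subseteq> (edge_ideal_C5 :: 'k::field poly5 set)" "prod_list xs = monom g"
    using monom_prod_exists[OF assms, where 'k='k] by blast
  show ?thesis unfolding ideal_pow_def
    by (rule ig_base, rule CollectI, rule exI[of _ xs]) (use xs in simp)
qed

lemma pow_monom_iff:
  "((monom b :: 'k::field poly5) \<in> ideal_pow edge_ideal_C5 q) \<longleftrightarrow> (\<exists>g\<in>Gs q. dvm g b)"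
proof
  assume "(monom b :: 'k::field poly5) \<in> ideal_pow edge_ideal_C5 q"
  then have "(monom b :: 'k::field poly5) \<in> ideal_gen (monom ` Gs q)" using pow_sub by blast
  then show "\<exists>g\<in>Gs q. dvm g b" by (simp add: M1_monom)
next
  assume "\<exists>g\<in>Gs q. dvm g b"
  then obtain g where g: "g \<in> Gs q" "dvm g b" by blast
  have "b = (b - g) + g"
    using g(2) by (intro poly_mapping_eqI) (simp add: lookup_add lookup_minus dvm_def)
  then have "(monom b :: 'k poly5) = monom (b - g) * monom g" by (simp add: monom_mult)
  moreover have "(monom g :: 'k poly5) \<in> ideal_pow edge_ideal_C5 q" by (rule monom_in_pow[OF g(1)])
  ultimately show "(monom b :: 'k::field poly5) \<in> ideal_pow edge_ideal_C5 q"
    unfolding ideal_pow_def by (simp add: ig_mult)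
qed

definition deg :: "(5 \<Rightarrow>\<^sub>0 nat) \<Rightarrow> nat" where
  "deg a = (\<Sum>i\<in>UNIV. Poly_Mapping.lookup a i)"

lemma deg_add: "deg (a + b) = deg a + deg b"
  unfolding deg_def by (simp add: lookup_add sum.distrib)

lemma deg_single: "deg (Poly_Mapping.single j 1) = 1"
  unfolding deg_def by (simp add: lookup_single when_def)

lemma deg_edge: "deg (edge j) = 2"
  unfolding edge_def deg_add deg_single by simp

lemma deg_zero: "deg 0 = 0"
  unfolding deg_def by simp

lemma deg_Gs: "g \<in> Gs q \<Longrightarrow> deg g = 2 * q"
proof (induction q arbitrary: g)
  case 0
  then show ?case by (simp add: deg_zero)
next
  case (Suc q)
  then obtain j h where "g = edge j + h" "h \<in> Gs q" by auto
  then show ?case using Suc.IH by (simp add: deg_add deg_edge)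
qed

lemma deg_mono: "dvm a b \<Longrightarrow> deg a \<le> deg b"
  unfolding deg_def dvm_def by (intro sum_mono) auto

lemma deg_pos: "c \<noteq> 0 \<Longrightarrow> deg c > 0"
proof -
  assume "c \<noteq> 0"
  then obtain i where "Poly_Mapping.lookup c i \<noteq> 0"
    by (metis lookup_zero poly_mapping_eqI)
  moreover have "Poly_Mapping.lookup c i \<le> deg c" unfolding deg_def
    by (rule member_le_sum) auto
  ultimately show "deg c > 0" by simp
qed

lemma mmg_eq: "min_mon_gens (ideal_pow (edge_ideal_C5 :: 'k::field poly5 set) q) = Gs q"
proof (intro set_eqI iffI)
  fix a assume a: "a \<in> min_mon_gens (ideal_pow (edge_ideal_C5 :: 'k::field poly5 set) q)"
  then have "(monom a :: 'k poly5) \<in> ideal_pow edge_ideal_C5 q" unfolding min_mon_gens_def by blast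
  then obtain g where g: "g \<in> Gs q" "dvm g a" using pow_monom_iff by blast
  have eq: "a = g + (a - g)"
    using g(2) by (intro poly_mapping_eqI) (simp add: lookup_add lookup_minus dvm_def)
  have "(monom g :: 'k poly5) \<in> ideal_pow edge_ideal_C5 q" by (rule monom_in_pow[OF g(1)])
  moreover have "\<forall>\<beta> \<gamma>. a = \<beta> + \<gamma> \<and> \<gamma> \<noteq> 0 \<longrightarrow> (monom \<beta> :: 'k poly5) \<notin> ideal_pow edge_ideal_C5 q"
    using a unfolding min_mon_gens_def by blast
  ultimately have "a - g = 0" using eq by blast
  then show "a \<in> Gs q" using eq g(1) by simp
next
  fix a assume a: "a \<in> Gs q"
  show "a \<in> min_mon_gens (ideal_pow (edge_ideal_C5 :: 'k::field poly5 set) q)"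
    unfolding min_mon_gens_def
  proof (intro CollectI conjI allI impI)
    show "(monom a :: 'k poly5) \<in> ideal_pow edge_ideal_C5 q" by (rule monom_in_pow[OF a])
  next
    fix b c assume bc: "a = b + c \<and> c \<noteq> 0"
    show "(monom b :: 'k poly5) \<notin> ideal_pow edge_ideal_C5 q"
    proof
      assume "(monom b :: 'k poly5) \<in> ideal_pow edge_ideal_C5 q"
      then obtain g where g: "g \<in> Gs q" "dvm g b" using pow_monom_iff by blast
      have "deg g \<le> deg b" by (rule deg_mono[OF g(2)])
      moreover have "deg a = deg b + deg c" using bc deg_add by simp
      moreover have "deg c > 0" using bc deg_pos by simp
      ultimately show False using deg_Gs[OF g(1)] deg_Gs[OF a] by simp
    qed
  qed
qed

definition L :: "(5 \<Rightarrow>\<^sub>0 nat) \<Rightarrow> 5 \<Rightarrow> int" where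
  "L a i = int (Poly_Mapping.lookup a i)"

definition lin5 :: "int \<Rightarrow> int \<Rightarrow> int \<Rightarrow> int \<Rightarrow> int \<Rightarrow> int \<Rightarrow> bool" where
  "lin5 Q x0 x1 x2 x3 x4 \<longleftrightarrow> x0 \<ge> 0 \<and> x1 \<ge> 0 \<and> x2 \<ge> 0 \<and> x3 \<ge> 0 \<and> x4 \<ge> 0 \<and>
     x0 + x1 + x2 + x3 + x4 = 2 * Q \<and> x0 + x2 \<le> Q \<and> x1 + x3 \<le> Q \<and> x2 + x4 \<le> Q \<and>
     x3 + x0 \<le> Q \<and> x4 + x1 \<le> Q"

definition linP :: "nat \<Rightarrow> (5 \<Rightarrow>\<^sub>0 nat) \<Rightarrow> bool" where
  "linP q a \<longleftrightarrow> lin5 (int q) (L a 0) (L a 1) (L a 2) (L a 3) (L a 4)"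

lemma pm_eq5:
  assumes "L a 0 = L b 0" "L a 1 = L b 1" "L a 2 = L b 2" "L a 3 = L b 3" "L a 4 = L b 4"
  shows "a = b"
proof (rule poly_mapping_eqI)
  fix k :: 5
  have "L a k = L b k" using five_cases[of k] assms by auto
  then show "Poly_Mapping.lookup a k = Poly_Mapping.lookup b k" unfolding L_def by simp
qed

lemma L_edge: "L (edge j + h) i = L h i + (if j = i then 1 else 0) + (if j + 1 = i then 1 else 0)"
  by (simp add: L_def edge_def lookup_add lookup_single when_def)

lemma L_nonneg: "L a i \<ge> 0" unfolding L_def by simp

lemma Gs_lin: "g \<in> Gs q \<Longrightarrow> linP q g"
proof (induction q arbitrary: g)
  case 0
  then show ?case by (simp add: linP_def lin5_def L_def)
next
  case (Suc q)
  then obtain j h where g: "g = edge j + h" "h \<in> Gs q" by auto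
  have IH: "lin5 (int q) (L h 0) (L h 1) (L h 2) (L h 3) (L h 4)" using Suc.IH[OF g(2)] by (simp add: linP_def)
  show ?case using five_cases[of j] IH unfolding g(1) linP_def lin5_def L_edge
    by (elim disjE; simp)
qed

lemma dvm_decomp: "dvm a b \<Longrightarrow> b = a + (b - a)"
  by (intro poly_mapping_eqI) (simp add: lookup_add lookup_minus dvm_def)

lemma L_minus_edge:
  assumes "L g j \<ge> 1" "L g (j+1) \<ge> 1"
  shows "L (g - edge j) i = L g i - (if j = i then 1 else 0) - (if j + 1 = i then 1 else 0)"
proof -
  have ne: "j + 1 \<noteq> j" by simp
  show ?thesis using assms ne
    by (cases "i = j"; cases "i = j + 1") (auto simp: L_def edge_def lookup_add lookup_minus lookup_single when_def of_nat_diff)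
qed

lemma dvm_edge:
  assumes "L g j \<ge> 1" "L g (j+1) \<ge> 1"
  shows "dvm (edge j) g"
proof -
  have ne: "j + 1 \<noteq> j" by simp
  show ?thesis unfolding dvm_def
  proof
    fix i
    show "Poly_Mapping.lookup (edge j) i \<le> Poly_Mapping.lookup g i"
      using assms ne by (cases "i = j"; cases "i = j + 1") (auto simp: L_def edge_def lookup_add lookup_single when_def)
  qed
qed

lemma pick5:
  fixes x0 x1 x2 x3 x4 Q :: int
  assumes "lin5 (1 + Q) x0 x1 x2 x3 x4" "Q \<ge> 0"
  shows "x2 + x4 \<le> Q \<or> x3 + x0 \<le> Q \<or> x4 + x1 \<le> Q \<or> x0 + x2 \<le> Q \<or> x1 + x3 \<le> Q"
  using assms unfolding lin5_def by smt

lemma lin_Gs: "linP q g \<Longrightarrow> g \<in> Gs q"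
proof (induction q arbitrary: g)
  case 0
  then have "g = 0" unfolding linP_def lin5_def
    by (intro pm_eq5) (simp_all add: L_def)
  then show ?case by simp
next
  case (Suc q)
  have H: "lin5 (int (Suc q)) (L g 0) (L g 1) (L g 2) (L g 3) (L g 4)" using Suc.prems by (simp add: linP_def)
  have step: "g \<in> Gs (Suc q)" if j1: "L g j \<ge> 1" "L g (j+1) \<ge> 1" and hl: "linP q (g - edge j)" for j
  proof -
    have "g = edge j + (g - edge j)" by (rule dvm_decomp[OF dvm_edge[OF j1]])
    moreover have "g - edge j \<in> Gs q" by (rule Suc.IH[OF hl])
    ultimately show ?thesis by (metis (mono_tags, lifting) Gs.simps(2) mem_Collect_eq)
  qed
  have "L g 2 + L g 4 \<le> int q \<or> L g 3 + L g 0 \<le> int q \<or> L g 4 + L g 1 \<le> int q \<or>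
        L g 0 + L g 2 \<le> int q \<or> L g 1 + L g 3 \<le> int q"
    using pick5[of "int q"] H by simp
  then show ?case
  proof (elim disjE)
    assume c: "L g 2 + L g 4 \<le> int q"
    have a1: "L g 0 \<ge> 1" using H c unfolding lin5_def of_nat_Suc distrib_left by (elim conjE) linarith
    have a2: "L g 1 \<ge> 1" using H c unfolding lin5_def of_nat_Suc distrib_left by (elim conjE) linarith
    have j1: "L g 0 \<ge> 1" "L g (0+1) \<ge> 1" using a1 a2 by simp_all
    show ?thesis using step[OF j1] H c unfolding linP_def lin5_def L_minus_edge[OF j1] by (simp; linarith?)
  next
    assume c: "L g 3 + L g 0 \<le> int q"
    have a1: "L g 1 \<ge> 1" using H c unfolding lin5_def of_nat_Suc distrib_left by (elim conjE) linarith
    have a2: "L g 2 \<ge> 1" using H c unfolding lin5_def of_nat_Suc distrib_left by (elim conjE) linarith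
    have j1: "L g 1 \<ge> 1" "L g (1+1) \<ge> 1" using a1 a2 by simp_all
    show ?thesis using step[OF j1] H c unfolding linP_def lin5_def L_minus_edge[OF j1] by (simp; linarith?)
  next
    assume c: "L g 4 + L g 1 \<le> int q"
    have a1: "L g 2 \<ge> 1" using H c unfolding lin5_def of_nat_Suc distrib_left by (elim conjE) linarith
    have a2: "L g 3 \<ge> 1" using H c unfolding lin5_def of_nat_Suc distrib_left by (elim conjE) linarith
    have j1: "L g 2 \<ge> 1" "L g (2+1) \<ge> 1" using a1 a2 by simp_all
    show ?thesis using step[OF j1] H c unfolding linP_def lin5_def L_minus_edge[OF j1] by (simp; linarith?)
  next
    assume c: "L g 0 + L g 2 \<le> int q"
    have a1: "L g 3 \<ge> 1" using H c unfolding lin5_def of_nat_Suc distrib_left by (elim conjE) linarith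
    have a2: "L g 4 \<ge> 1" using H c unfolding lin5_def of_nat_Suc distrib_left by (elim conjE) linarith
    have j1: "L g 3 \<ge> 1" "L g (3+1) \<ge> 1" using a1 a2 by simp_all
    show ?thesis using step[OF j1] H c unfolding linP_def lin5_def L_minus_edge[OF j1] by (simp; linarith?)
  next
    assume c: "L g 1 + L g 3 \<le> int q"
    have a1: "L g 4 \<ge> 1" using H c unfolding lin5_def of_nat_Suc distrib_left by (elim conjE) linarith
    have a2: "L g 0 \<ge> 1" using H c unfolding lin5_def of_nat_Suc distrib_left by (elim conjE) linarith
    have j1: "L g 4 \<ge> 1" "L g (4+1) \<ge> 1" using a1 a2 by simp_all
    show ?thesis using step[OF j1] H c unfolding linP_def lin5_def L_minus_edge[OF j1] by (simp; linarith?)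
  qed
qed

lemma Gs_iff: "g \<in> Gs q \<longleftrightarrow> linP q g"
  using Gs_lin lin_Gs by blast

definition keyt :: "int \<Rightarrow> int \<Rightarrow> int \<Rightarrow> int \<Rightarrow> int \<Rightarrow> int \<Rightarrow> int \<times> int \<times> int \<times> int \<times> int" where
  "keyt Q x0 x1 x2 x3 x4 = (- x0, (if x0 + x2 = Q \<and> x0 + x3 = Q then 1 else 0), x1, x2, x3)"

definition key :: "nat \<Rightarrow> (5 \<Rightarrow>\<^sub>0 nat) \<Rightarrow> int \<times> int \<times> int \<times> int \<times> int" where
  "key q a = keyt (int q) (L a 0) (L a 1) (L a 2) (L a 3) (L a 4)"

lemma keyt_less: "keyt Q x0 x1 x2 x3 x4 < keyt Q y0 y1 y2 y3 y4 \<longleftrightarrow>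
  (y0 < x0 \<or> (x0 = y0 \<and> ((\<not>(x0 + x2 = Q \<and> x0 + x3 = Q) \<and> (y0 + y2 = Q \<and> y0 + y3 = Q)) \<or>
    ((x0 + x2 = Q \<and> x0 + x3 = Q) = (y0 + y2 = Q \<and> y0 + y3 = Q) \<and>
     (x1 < y1 \<or> x1 = y1 \<and> (x2 < y2 \<or> x2 = y2 \<and> x3 < y3))))))"
  unfolding keyt_def by (auto split: if_splits)

lemma L_sh:
  assumes "v \<noteq> w" "L u w \<ge> 1"
  shows "L (u + Poly_Mapping.single v 1 - Poly_Mapping.single w 1) i
       = L u i + (if v = i then 1 else 0) - (if w = i then 1 else 0)"
  using assms
  by (cases "i = v"; cases "i = w") (auto simp: L_def lookup_add lookup_minus lookup_single when_def of_nat_diff)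

lemma wit:
  fixes v w :: 5
  assumes "v \<noteq> w" "L u w \<ge> 1" "L u v < L a v"
    "linP q (u + Poly_Mapping.single v 1 - Poly_Mapping.single w 1)"
    "key q (u + Poly_Mapping.single v 1 - Poly_Mapping.single w 1) < key q u"
  shows "\<exists>v b. Poly_Mapping.lookup u v < Poly_Mapping.lookup a v \<and> linP q b \<and> key q b < key q u \<and> dvm b (u + Poly_Mapping.single v 1)"
proof -
  have "dvm (u + Poly_Mapping.single v 1 - Poly_Mapping.single w 1) (u + Poly_Mapping.single v 1)"
    unfolding dvm_def by (simp add: lookup_minus)
  moreover have "Poly_Mapping.lookup u v < Poly_Mapping.lookup a v" using assms(3) unfolding L_def by simp
  ultimately show ?thesis using assms(4,5) by blast
qed

lemma core:
  fixes a0 a1 a2 a3 a4 u0 u1 u2 u3 u4 Q :: int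
  assumes "Q \<ge> 2" "lin5 Q a0 a1 a2 a3 a4" "lin5 Q u0 u1 u2 u3 u4" "keyt Q a0 a1 a2 a3 a4 < keyt Q u0 u1 u2 u3 u4"
  shows "(a0 > u0 \<and> lin5 Q (u0 + 1) (u1 - 1) u2 u3 u4 \<and> keyt Q (u0 + 1) (u1 - 1) u2 u3 u4 < keyt Q u0 u1 u2 u3 u4) \<or>
   (a0 > u0 \<and> lin5 Q (u0 + 1) u1 (u2 - 1) u3 u4 \<and> keyt Q (u0 + 1) u1 (u2 - 1) u3 u4 < keyt Q u0 u1 u2 u3 u4) \<or>
   (a0 > u0 \<and> lin5 Q (u0 + 1) u1 u2 (u3 - 1) u4 \<and> keyt Q (u0 + 1) u1 u2 (u3 - 1) u4 < keyt Q u0 u1 u2 u3 u4) \<or>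
   (a0 > u0 \<and> lin5 Q (u0 + 1) u1 u2 u3 (u4 - 1) \<and> keyt Q (u0 + 1) u1 u2 u3 (u4 - 1) < keyt Q u0 u1 u2 u3 u4) \<or>
   (a1 > u1 \<and> lin5 Q (u0 - 1) (u1 + 1) u2 u3 u4 \<and> keyt Q (u0 - 1) (u1 + 1) u2 u3 u4 < keyt Q u0 u1 u2 u3 u4) \<or>
   (a1 > u1 \<and> lin5 Q u0 (u1 + 1) (u2 - 1) u3 u4 \<and> keyt Q u0 (u1 + 1) (u2 - 1) u3 u4 < keyt Q u0 u1 u2 u3 u4) \<or>
   (a1 > u1 \<and> lin5 Q u0 (u1 + 1) u2 (u3 - 1) u4 \<and> keyt Q u0 (u1 + 1) u2 (u3 - 1) u4 < keyt Q u0 u1 u2 u3 u4) \<or>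
   (a1 > u1 \<and> lin5 Q u0 (u1 + 1) u2 u3 (u4 - 1) \<and> keyt Q u0 (u1 + 1) u2 u3 (u4 - 1) < keyt Q u0 u1 u2 u3 u4) \<or>
   (a2 > u2 \<and> lin5 Q (u0 - 1) u1 (u2 + 1) u3 u4 \<and> keyt Q (u0 - 1) u1 (u2 + 1) u3 u4 < keyt Q u0 u1 u2 u3 u4) \<or>
   (a2 > u2 \<and> lin5 Q u0 (u1 - 1) (u2 + 1) u3 u4 \<and> keyt Q u0 (u1 - 1) (u2 + 1) u3 u4 < keyt Q u0 u1 u2 u3 u4) \<or>
   (a2 > u2 \<and> lin5 Q u0 u1 (u2 + 1) (u3 - 1) u4 \<and> keyt Q u0 u1 (u2 + 1) (u3 - 1) u4 < keyt Q u0 u1 u2 u3 u4) \<or>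
   (a2 > u2 \<and> lin5 Q u0 u1 (u2 + 1) u3 (u4 - 1) \<and> keyt Q u0 u1 (u2 + 1) u3 (u4 - 1) < keyt Q u0 u1 u2 u3 u4) \<or>
   (a3 > u3 \<and> lin5 Q (u0 - 1) u1 u2 (u3 + 1) u4 \<and> keyt Q (u0 - 1) u1 u2 (u3 + 1) u4 < keyt Q u0 u1 u2 u3 u4) \<or>
   (a3 > u3 \<and> lin5 Q u0 (u1 - 1) u2 (u3 + 1) u4 \<and> keyt Q u0 (u1 - 1) u2 (u3 + 1) u4 < keyt Q u0 u1 u2 u3 u4) \<or>
   (a3 > u3 \<and> lin5 Q u0 u1 (u2 - 1) (u3 + 1) u4 \<and> keyt Q u0 u1 (u2 - 1) (u3 + 1) u4 < keyt Q u0 u1 u2 u3 u4) \<or>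
   (a3 > u3 \<and> lin5 Q u0 u1 u2 (u3 + 1) (u4 - 1) \<and> keyt Q u0 u1 u2 (u3 + 1) (u4 - 1) < keyt Q u0 u1 u2 u3 u4) \<or>
   (a4 > u4 \<and> lin5 Q (u0 - 1) u1 u2 u3 (u4 + 1) \<and> keyt Q (u0 - 1) u1 u2 u3 (u4 + 1) < keyt Q u0 u1 u2 u3 u4) \<or>
   (a4 > u4 \<and> lin5 Q u0 (u1 - 1) u2 u3 (u4 + 1) \<and> keyt Q u0 (u1 - 1) u2 u3 (u4 + 1) < keyt Q u0 u1 u2 u3 u4) \<or>
   (a4 > u4 \<and> lin5 Q u0 u1 (u2 - 1) u3 (u4 + 1) \<and> keyt Q u0 u1 (u2 - 1) u3 (u4 + 1) < keyt Q u0 u1 u2 u3 u4) \<or>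
   (a4 > u4 \<and> lin5 Q u0 u1 u2 (u3 - 1) (u4 + 1) \<and> keyt Q u0 u1 u2 (u3 - 1) (u4 + 1) < keyt Q u0 u1 u2 u3 u4)"
  using assms unfolding lin5_def keyt_less by smt

lemma comb:
  assumes q2: "q \<ge> 2" and a: "linP q a" and u: "linP q u" and lt: "key q a < key q u"
  shows "\<exists>v b. Poly_Mapping.lookup u v < Poly_Mapping.lookup a v \<and> linP q b \<and> key q b < key q u \<and> dvm b (u + Poly_Mapping.single v 1)"
proof -
  have q2': "int q \<ge> 2" using q2 by simp
  have D: "((L a 0) > (L u 0) \<and> lin5 (int q) ((L u 0) + 1) ((L u 1) - 1) (L u 2) (L u 3) (L u 4) \<and> keyt (int q) ((L u 0) + 1) ((L u 1) - 1) (L u 2) (L u 3) (L u 4) < keyt (int q) (L u 0) (L u 1) (L u 2) (L u 3) (L u 4)) \<or>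
   ((L a 0) > (L u 0) \<and> lin5 (int q) ((L u 0) + 1) (L u 1) ((L u 2) - 1) (L u 3) (L u 4) \<and> keyt (int q) ((L u 0) + 1) (L u 1) ((L u 2) - 1) (L u 3) (L u 4) < keyt (int q) (L u 0) (L u 1) (L u 2) (L u 3) (L u 4)) \<or>
   ((L a 0) > (L u 0) \<and> lin5 (int q) ((L u 0) + 1) (L u 1) (L u 2) ((L u 3) - 1) (L u 4) \<and> keyt (int q) ((L u 0) + 1) (L u 1) (L u 2) ((L u 3) - 1) (L u 4) < keyt (int q) (L u 0) (L u 1) (L u 2) (L u 3) (L u 4)) \<or>
   ((L a 0) > (L u 0) \<and> lin5 (int q) ((L u 0) + 1) (L u 1) (L u 2) (L u 3) ((L u 4) - 1) \<and> keyt (int q) ((L u 0) + 1) (L u 1) (L u 2) (L u 3) ((L u 4) - 1) < keyt (int q) (L u 0) (L u 1) (L u 2) (L u 3) (L u 4)) \<or>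
   ((L a 1) > (L u 1) \<and> lin5 (int q) ((L u 0) - 1) ((L u 1) + 1) (L u 2) (L u 3) (L u 4) \<and> keyt (int q) ((L u 0) - 1) ((L u 1) + 1) (L u 2) (L u 3) (L u 4) < keyt (int q) (L u 0) (L u 1) (L u 2) (L u 3) (L u 4)) \<or>
   ((L a 1) > (L u 1) \<and> lin5 (int q) (L u 0) ((L u 1) + 1) ((L u 2) - 1) (L u 3) (L u 4) \<and> keyt (int q) (L u 0) ((L u 1) + 1) ((L u 2) - 1) (L u 3) (L u 4) < keyt (int q) (L u 0) (L u 1) (L u 2) (L u 3) (L u 4)) \<or>
   ((L a 1) > (L u 1) \<and> lin5 (int q) (L u 0) ((L u 1) + 1) (L u 2) ((L u 3) - 1) (L u 4) \<and> keyt (int q) (L u 0) ((L u 1) + 1) (L u 2) ((L u 3) - 1) (L u 4) < keyt (int q) (L u 0) (L u 1) (L u 2) (L u 3) (L u 4)) \<or>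
   ((L a 1) > (L u 1) \<and> lin5 (int q) (L u 0) ((L u 1) + 1) (L u 2) (L u 3) ((L u 4) - 1) \<and> keyt (int q) (L u 0) ((L u 1) + 1) (L u 2) (L u 3) ((L u 4) - 1) < keyt (int q) (L u 0) (L u 1) (L u 2) (L u 3) (L u 4)) \<or>
   ((L a 2) > (L u 2) \<and> lin5 (int q) ((L u 0) - 1) (L u 1) ((L u 2) + 1) (L u 3) (L u 4) \<and> keyt (int q) ((L u 0) - 1) (L u 1) ((L u 2) + 1) (L u 3) (L u 4) < keyt (int q) (L u 0) (L u 1) (L u 2) (L u 3) (L u 4)) \<or>
   ((L a 2) > (L u 2) \<and> lin5 (int q) (L u 0) ((L u 1) - 1) ((L u 2) + 1) (L u 3) (L u 4) \<and> keyt (int q) (L u 0) ((L u 1) - 1) ((L u 2) + 1) (L u 3) (L u 4) < keyt (int q) (L u 0) (L u 1) (L u 2) (L u 3) (L u 4)) \<or>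
   ((L a 2) > (L u 2) \<and> lin5 (int q) (L u 0) (L u 1) ((L u 2) + 1) ((L u 3) - 1) (L u 4) \<and> keyt (int q) (L u 0) (L u 1) ((L u 2) + 1) ((L u 3) - 1) (L u 4) < keyt (int q) (L u 0) (L u 1) (L u 2) (L u 3) (L u 4)) \<or>
   ((L a 2) > (L u 2) \<and> lin5 (int q) (L u 0) (L u 1) ((L u 2) + 1) (L u 3) ((L u 4) - 1) \<and> keyt (int q) (L u 0) (L u 1) ((L u 2) + 1) (L u 3) ((L u 4) - 1) < keyt (int q) (L u 0) (L u 1) (L u 2) (L u 3) (L u 4)) \<or>
   ((L a 3) > (L u 3) \<and> lin5 (int q) ((L u 0) - 1) (L u 1) (L u 2) ((L u 3) + 1) (L u 4) \<and> keyt (int q) ((L u 0) - 1) (L u 1) (L u 2) ((L u 3) + 1) (L u 4) < keyt (int q) (L u 0) (L u 1) (L u 2) (L u 3) (L u 4)) \<or>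
   ((L a 3) > (L u 3) \<and> lin5 (int q) (L u 0) ((L u 1) - 1) (L u 2) ((L u 3) + 1) (L u 4) \<and> keyt (int q) (L u 0) ((L u 1) - 1) (L u 2) ((L u 3) + 1) (L u 4) < keyt (int q) (L u 0) (L u 1) (L u 2) (L u 3) (L u 4)) \<or>
   ((L a 3) > (L u 3) \<and> lin5 (int q) (L u 0) (L u 1) ((L u 2) - 1) ((L u 3) + 1) (L u 4) \<and> keyt (int q) (L u 0) (L u 1) ((L u 2) - 1) ((L u 3) + 1) (L u 4) < keyt (int q) (L u 0) (L u 1) (L u 2) (L u 3) (L u 4)) \<or>
   ((L a 3) > (L u 3) \<and> lin5 (int q) (L u 0) (L u 1) (L u 2) ((L u 3) + 1) ((L u 4) - 1) \<and> keyt (int q) (L u 0) (L u 1) (L u 2) ((L u 3) + 1) ((L u 4) - 1) < keyt (int q) (L u 0) (L u 1) (L u 2) (L u 3) (L u 4)) \<or>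
   ((L a 4) > (L u 4) \<and> lin5 (int q) ((L u 0) - 1) (L u 1) (L u 2) (L u 3) ((L u 4) + 1) \<and> keyt (int q) ((L u 0) - 1) (L u 1) (L u 2) (L u 3) ((L u 4) + 1) < keyt (int q) (L u 0) (L u 1) (L u 2) (L u 3) (L u 4)) \<or>
   ((L a 4) > (L u 4) \<and> lin5 (int q) (L u 0) ((L u 1) - 1) (L u 2) (L u 3) ((L u 4) + 1) \<and> keyt (int q) (L u 0) ((L u 1) - 1) (L u 2) (L u 3) ((L u 4) + 1) < keyt (int q) (L u 0) (L u 1) (L u 2) (L u 3) (L u 4)) \<or>
   ((L a 4) > (L u 4) \<and> lin5 (int q) (L u 0) (L u 1) ((L u 2) - 1) (L u 3) ((L u 4) + 1) \<and> keyt (int q) (L u 0) (L u 1) ((L u 2) - 1) (L u 3) ((L u 4) + 1) < keyt (int q) (L u 0) (L u 1) (L u 2) (L u 3) (L u 4)) \<or>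
   ((L a 4) > (L u 4) \<and> lin5 (int q) (L u 0) (L u 1) (L u 2) ((L u 3) - 1) ((L u 4) + 1) \<and> keyt (int q) (L u 0) (L u 1) (L u 2) ((L u 3) - 1) ((L u 4) + 1) < keyt (int q) (L u 0) (L u 1) (L u 2) (L u 3) (L u 4))"
    by (rule core[OF q2' a[unfolded linP_def] u[unfolded linP_def] lt[unfolded key_def]])
  show ?thesis
    using D
    apply (elim disjE)
    subgoal premises h
    proof -
      have hw: "L u 1 \<ge> 1" using h unfolding lin5_def by simp
      have e: "L (u + Poly_Mapping.single 0 1 - Poly_Mapping.single 1 1) i = L u i + (if 0 = i then 1 else 0) - (if 1 = i then 1 else 0)" for i
        by (rule L_sh) (simp_all add: hw)
      show ?thesis
        apply (rule wit[of 0 1])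
        unfolding linP_def key_def e using h hw by simp_all
    qed
    subgoal premises h
    proof -
      have hw: "L u 2 \<ge> 1" using h unfolding lin5_def by simp
      have e: "L (u + Poly_Mapping.single 0 1 - Poly_Mapping.single 2 1) i = L u i + (if 0 = i then 1 else 0) - (if 2 = i then 1 else 0)" for i
        by (rule L_sh) (simp_all add: hw)
      show ?thesis
        apply (rule wit[of 0 2])
        unfolding linP_def key_def e using h hw by simp_all
    qed
    subgoal premises h
    proof -
      have hw: "L u 3 \<ge> 1" using h unfolding lin5_def by simp
      have e: "L (u + Poly_Mapping.single 0 1 - Poly_Mapping.single 3 1) i = L u i + (if 0 = i then 1 else 0) - (if 3 = i then 1 else 0)" for i
        by (rule L_sh) (simp_all add: hw)
      show ?thesis
        apply (rule wit[of 0 3])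
        unfolding linP_def key_def e using h hw by simp_all
    qed
    subgoal premises h
    proof -
      have hw: "L u 4 \<ge> 1" using h unfolding lin5_def by simp
      have e: "L (u + Poly_Mapping.single 0 1 - Poly_Mapping.single 4 1) i = L u i + (if 0 = i then 1 else 0) - (if 4 = i then 1 else 0)" for i
        by (rule L_sh) (simp_all add: hw)
      show ?thesis
        apply (rule wit[of 0 4])
        unfolding linP_def key_def e using h hw by simp_all
    qed
    subgoal premises h
    proof -
      have hw: "L u 0 \<ge> 1" using h unfolding lin5_def by simp
      have e: "L (u + Poly_Mapping.single 1 1 - Poly_Mapping.single 0 1) i = L u i + (if 1 = i then 1 else 0) - (if 0 = i then 1 else 0)" for i
        by (rule L_sh) (simp_all add: hw)
      show ?thesis
        apply (rule wit[of 1 0])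
        unfolding linP_def key_def e using h hw by simp_all
    qed
    subgoal premises h
    proof -
      have hw: "L u 2 \<ge> 1" using h unfolding lin5_def by simp
      have e: "L (u + Poly_Mapping.single 1 1 - Poly_Mapping.single 2 1) i = L u i + (if 1 = i then 1 else 0) - (if 2 = i then 1 else 0)" for i
        by (rule L_sh) (simp_all add: hw)
      show ?thesis
        apply (rule wit[of 1 2])
        unfolding linP_def key_def e using h hw by simp_all
    qed
    subgoal premises h
    proof -
      have hw: "L u 3 \<ge> 1" using h unfolding lin5_def by simp
      have e: "L (u + Poly_Mapping.single 1 1 - Poly_Mapping.single 3 1) i = L u i + (if 1 = i then 1 else 0) - (if 3 = i then 1 else 0)" for i
        by (rule L_sh) (simp_all add: hw)
      show ?thesis
        apply (rule wit[of 1 3])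
        unfolding linP_def key_def e using h hw by simp_all
    qed
    subgoal premises h
    proof -
      have hw: "L u 4 \<ge> 1" using h unfolding lin5_def by simp
      have e: "L (u + Poly_Mapping.single 1 1 - Poly_Mapping.single 4 1) i = L u i + (if 1 = i then 1 else 0) - (if 4 = i then 1 else 0)" for i
        by (rule L_sh) (simp_all add: hw)
      show ?thesis
        apply (rule wit[of 1 4])
        unfolding linP_def key_def e using h hw by simp_all
    qed
    subgoal premises h
    proof -
      have hw: "L u 0 \<ge> 1" using h unfolding lin5_def by simp
      have e: "L (u + Poly_Mapping.single 2 1 - Poly_Mapping.single 0 1) i = L u i + (if 2 = i then 1 else 0) - (if 0 = i then 1 else 0)" for i
        by (rule L_sh) (simp_all add: hw)
      show ?thesis
        apply (rule wit[of 2 0])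
        unfolding linP_def key_def e using h hw by simp_all
    qed
    subgoal premises h
    proof -
      have hw: "L u 1 \<ge> 1" using h unfolding lin5_def by simp
      have e: "L (u + Poly_Mapping.single 2 1 - Poly_Mapping.single 1 1) i = L u i + (if 2 = i then 1 else 0) - (if 1 = i then 1 else 0)" for i
        by (rule L_sh) (simp_all add: hw)
      show ?thesis
        apply (rule wit[of 2 1])
        unfolding linP_def key_def e using h hw by simp_all
    qed
    subgoal premises h
    proof -
      have hw: "L u 3 \<ge> 1" using h unfolding lin5_def by simp
      have e: "L (u + Poly_Mapping.single 2 1 - Poly_Mapping.single 3 1) i = L u i + (if 2 = i then 1 else 0) - (if 3 = i then 1 else 0)" for i
        by (rule L_sh) (simp_all add: hw)
      show ?thesis
        apply (rule wit[of 2 3])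
        unfolding linP_def key_def e using h hw by simp_all
    qed
    subgoal premises h
    proof -
      have hw: "L u 4 \<ge> 1" using h unfolding lin5_def by simp
      have e: "L (u + Poly_Mapping.single 2 1 - Poly_Mapping.single 4 1) i = L u i + (if 2 = i then 1 else 0) - (if 4 = i then 1 else 0)" for i
        by (rule L_sh) (simp_all add: hw)
      show ?thesis
        apply (rule wit[of 2 4])
        unfolding linP_def key_def e using h hw by simp_all
    qed
    subgoal premises h
    proof -
      have hw: "L u 0 \<ge> 1" using h unfolding lin5_def by simp
      have e: "L (u + Poly_Mapping.single 3 1 - Poly_Mapping.single 0 1) i = L u i + (if 3 = i then 1 else 0) - (if 0 = i then 1 else 0)" for i
        by (rule L_sh) (simp_all add: hw)
      show ?thesis
        apply (rule wit[of 3 0])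
        unfolding linP_def key_def e using h hw by simp_all
    qed
    subgoal premises h
    proof -
      have hw: "L u 1 \<ge> 1" using h unfolding lin5_def by simp
      have e: "L (u + Poly_Mapping.single 3 1 - Poly_Mapping.single 1 1) i = L u i + (if 3 = i then 1 else 0) - (if 1 = i then 1 else 0)" for i
        by (rule L_sh) (simp_all add: hw)
      show ?thesis
        apply (rule wit[of 3 1])
        unfolding linP_def key_def e using h hw by simp_all
    qed
    subgoal premises h
    proof -
      have hw: "L u 2 \<ge> 1" using h unfolding lin5_def by simp
      have e: "L (u + Poly_Mapping.single 3 1 - Poly_Mapping.single 2 1) i = L u i + (if 3 = i then 1 else 0) - (if 2 = i then 1 else 0)" for i
        by (rule L_sh) (simp_all add: hw)
      show ?thesis
        apply (rule wit[of 3 2])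
        unfolding linP_def key_def e using h hw by simp_all
    qed
    subgoal premises h
    proof -
      have hw: "L u 4 \<ge> 1" using h unfolding lin5_def by simp
      have e: "L (u + Poly_Mapping.single 3 1 - Poly_Mapping.single 4 1) i = L u i + (if 3 = i then 1 else 0) - (if 4 = i then 1 else 0)" for i
        by (rule L_sh) (simp_all add: hw)
      show ?thesis
        apply (rule wit[of 3 4])
        unfolding linP_def key_def e using h hw by simp_all
    qed
    subgoal premises h
    proof -
      have hw: "L u 0 \<ge> 1" using h unfolding lin5_def by simp
      have e: "L (u + Poly_Mapping.single 4 1 - Poly_Mapping.single 0 1) i = L u i + (if 4 = i then 1 else 0) - (if 0 = i then 1 else 0)" for i
        by (rule L_sh) (simp_all add: hw)
      show ?thesis
        apply (rule wit[of 4 0])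
        unfolding linP_def key_def e using h hw by simp_all
    qed
    subgoal premises h
    proof -
      have hw: "L u 1 \<ge> 1" using h unfolding lin5_def by simp
      have e: "L (u + Poly_Mapping.single 4 1 - Poly_Mapping.single 1 1) i = L u i + (if 4 = i then 1 else 0) - (if 1 = i then 1 else 0)" for i
        by (rule L_sh) (simp_all add: hw)
      show ?thesis
        apply (rule wit[of 4 1])
        unfolding linP_def key_def e using h hw by simp_all
    qed
    subgoal premises h
    proof -
      have hw: "L u 2 \<ge> 1" using h unfolding lin5_def by simp
      have e: "L (u + Poly_Mapping.single 4 1 - Poly_Mapping.single 2 1) i = L u i + (if 4 = i then 1 else 0) - (if 2 = i then 1 else 0)" for i
        by (rule L_sh) (simp_all add: hw)
      show ?thesis
        apply (rule wit[of 4 2])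
        unfolding linP_def key_def e using h hw by simp_all
    qed
    subgoal premises h
    proof -
      have hw: "L u 3 \<ge> 1" using h unfolding lin5_def by simp
      have e: "L (u + Poly_Mapping.single 4 1 - Poly_Mapping.single 3 1) i = L u i + (if 4 = i then 1 else 0) - (if 3 = i then 1 else 0)" for i
        by (rule L_sh) (simp_all add: hw)
      show ?thesis
        apply (rule wit[of 4 3])
        unfolding linP_def key_def e using h hw by simp_all
    qed
    done
qed

lemma colon_eq:
  assumes H: "\<forall>p\<in>P. \<exists>v. Poly_Mapping.lookup u v < Poly_Mapping.lookup p v \<and> (\<exists>b\<in>P. dvm b (u + Poly_Mapping.single v 1))"
  shows "colon (ideal_gen ((monom :: _ \<Rightarrow> 'k::field poly5) ` P)) (monom u)
       = ideal_gen (var ` {v. \<exists>b\<in>P. dvm b (u + Poly_Mapping.single v 1)})"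
proof -
  define V where "V = {v. \<exists>b\<in>P. dvm b (u + Poly_Mapping.single v 1)}"
  have varV: "(var ` V :: 'k poly5 set) = monom ` ((\<lambda>v. Poly_Mapping.single v 1) ` V)"
    by (auto simp: var_def)
  show ?thesis unfolding V_def[symmetric]
  proof (intro set_eqI iffI)
    fix f :: "'k poly5"
    assume "f \<in> colon (ideal_gen (monom ` P)) (monom u)"
    then have fu: "f * monom u \<in> ideal_gen (monom ` P)" unfolding colon_def by simp
    show "f \<in> ideal_gen (var ` V)" unfolding varV
    proof (rule M1b)
      fix m assume m: "m \<in> Poly_Mapping.keys f"
      have "m + u \<in> Poly_Mapping.keys (f * monom u)"
        using m by (simp add: in_keys_iff shift_lookup)
      then obtain p where p: "p \<in> P" "dvm p (m + u)" using M1a[OF fu] by blast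
      then obtain v where v: "Poly_Mapping.lookup u v < Poly_Mapping.lookup p v"
        "\<exists>b\<in>P. dvm b (u + Poly_Mapping.single v 1)" using H by blast
      have vV: "v \<in> V" unfolding V_def using v(2) by blast
      have "Poly_Mapping.lookup p v \<le> Poly_Mapping.lookup m v + Poly_Mapping.lookup u v"
        using p(2) unfolding dvm_def by (simp add: lookup_add)
      then have "1 \<le> Poly_Mapping.lookup m v" using v(1) by simp
      then have "dvm (Poly_Mapping.single v 1) m"
        unfolding dvm_def by (simp add: lookup_single when_def)
      then show "\<exists>a\<in>(\<lambda>v. Poly_Mapping.single v 1) ` V. dvm a m" using vV by blast
    qed
  next
    fix f :: "'k poly5"
    assume "f \<in> ideal_gen (var ` V)"
    then obtain F c where F: "finite F" "F \<subseteq> var ` V" "f = (\<Sum>s\<in>F. c s * s)"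
      unfolding ideal_gen_def mem_Collect_eq by (elim exE conjE) blast
    have each: "s * monom u \<in> ideal_gen ((monom :: _ \<Rightarrow> 'k poly5) ` P)" if sF: "s \<in> F" for s
    proof -
      obtain v where v: "v \<in> V" "s = var v" using F(2) sF by blast
      obtain b where b: "b \<in> P" "dvm b (u + Poly_Mapping.single v 1)" using v(1) unfolding V_def by blast
      have "s * monom u = monom (Poly_Mapping.single v 1 + u)" unfolding v(2) var_def by (simp add: monom_mult)
      moreover have "dvm b (Poly_Mapping.single v 1 + u)" using b(2) by (simp add: add.commute)
      ultimately show ?thesis using b(1) by (simp add: M1_monom) blast
    qed
    have "f * monom u = (\<Sum>s\<in>F. c s * (s * monom u))"
      unfolding F(3) by (simp add: sum_distrib_right mult.assoc)
    also have "\<dots> \<in> ideal_gen (monom ` P)"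
      using F(1) by (intro ig_sum ig_mult[OF each]) auto
    finally show "f \<in> colon (ideal_gen (monom ` P)) (monom u)" unfolding colon_def by simp
  qed
qed

lemma finite_Gs: "finite (Gs q)"
proof (induction q)
  case 0
  then show ?case by simp
next
  case (Suc q)
  have "Gs (Suc q) = (\<lambda>(j, g). edge j + g) ` (UNIV \<times> Gs q)" by auto
  then show ?case using Suc by simp
qed

lemma key_inj:
  assumes "a \<in> Gs q" "b \<in> Gs q" "key q a = key q b"
  shows "a = b"
proof -
  have la: "linP q a" and lb: "linP q b" using assms Gs_iff by blast+
  have e: "L a 0 = L b 0" "L a 1 = L b 1" "L a 2 = L b 2" "L a 3 = L b 3"
    using assms(3) unfolding key_def keyt_def by auto
  have "L a 4 = L b 4" using la lb e unfolding linP_def lin5_def by linarith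
  then show ?thesis using e pm_eq5 by blast
qed

theorem proposition4p2:
  fixes q :: nat
  assumes "q \<ge> 2"
  shows "has_linear_quotients (ideal_pow (edge_ideal_C5 :: 'k::field poly5 set) q)"
proof -
  obtain xs where xs: "set xs = Gs q" "distinct xs" using finite_distinct_list[OF finite_Gs] by blast
  define us where "us = sort_key (key q) xs"
  have dist: "distinct us" and setus: "set us = Gs q" and srt: "sorted (map (key q) us)"
    unfolding us_def using xs by simp_all
  have mono: "key q (us ! i) < key q (us ! j)" if ij: "i < j" "j < length us" for i j
  proof -
    have "map (key q) us ! i \<le> map (key q) us ! j"
      using sorted_nth_mono[OF srt, of i j] ij by simp
    then have le: "key q (us ! i) \<le> key q (us ! j)" using ij by simp
    have "us ! i \<noteq> us ! j" using dist ij by (simp add: nth_eq_iff_index_eq)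
    moreover have "us ! i \<in> Gs q" "us ! j \<in> Gs q" using ij setus nth_mem by fastforce+
    ultimately have "key q (us ! i) \<noteq> key q (us ! j)" using key_inj by blast
    then show ?thesis using le by simp
  qed
  have colon_ok: "\<exists>V. colon (ideal_gen (monom ` set (take i us)) :: 'k poly5 set) (monom (us ! i))
               = ideal_gen (var ` V)" if i: "1 \<le> i" "i < length us" for i
  proof -
    define P where "P = set (take i us)"
    define u where "u = us ! i"
    have uG: "u \<in> Gs q" unfolding u_def using i setus nth_mem by blast
    have H: "\<forall>p\<in>P. \<exists>v. Poly_Mapping.lookup u v < Poly_Mapping.lookup p v \<and> (\<exists>b\<in>P. dvm b (u + Poly_Mapping.single v 1))"
    proof
      fix p assume "p \<in> P"
      then obtain j where j: "j < i" "p = us ! j" unfolding P_def using i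
        by (auto simp: in_set_conv_nth)
      have pG: "p \<in> Gs q" using j i setus nth_mem by (metis order.strict_trans)
      have lt: "key q p < key q u" unfolding u_def j(2) using j i by (intro mono) auto
      obtain v b where vb: "Poly_Mapping.lookup u v < Poly_Mapping.lookup p v" "linP q b"
        "key q b < key q u" "dvm b (u + Poly_Mapping.single v 1)"
        using comb[OF assms _ _ lt] pG uG Gs_iff by blast
      have "b \<in> set us" using vb(2) setus Gs_iff by blast
      then obtain k where k: "k < length us" "b = us ! k" by (auto simp: in_set_conv_nth)
      have "k < i"
      proof (rule ccontr)
        assume "\<not> k < i"
        then consider "k = i" | "i < k" by linarith
        then show False
        proof cases
          case 1 then show False using vb(3) k unfolding u_def by simp
        next
          case 2 then have "key q u < key q b" unfolding u_def k(2) using k by (intro mono) auto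
          then show False using vb(3) by simp
        qed
      qed
      then have "b \<in> P" unfolding P_def using k i by (auto simp: in_set_conv_nth)
      then show "\<exists>v. Poly_Mapping.lookup u v < Poly_Mapping.lookup p v \<and> (\<exists>b\<in>P. dvm b (u + Poly_Mapping.single v 1))"
        using vb by blast
    qed
    show ?thesis unfolding P_def[symmetric] u_def[symmetric]
      using colon_eq[OF H, where 'k='k] by blast
  qed
  show ?thesis unfolding has_linear_quotients_def
    using dist setus mmg_eq colon_ok by (intro exI[of _ us]) auto
qed

end
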